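(* Let $E$ be a Fréchet space, $E^*$ its topological dual with the weak$^*$ topology, $J=[a,b]$ with $a<b$, and $f,g:J\to E^*$ continuous. Then $$\int_a^b\big\{f(t)(\mu(t))+g(t)(\mu'(t))\big\}\,dt=0$$ for every $\mu\in C^1(J,E)$ with $\mu(a)=\mu(b)=0$ if and only if the map $h:J\to E^*$, $$h(t)=g(t)-\int_a^t f(s)\,ds,$$ is constant on $J$.
   Context: $C^1(J,E)$ denotes continuously differentiable curves $J\to E$. For a continuous $f:J\to E^*$, $\int_a^t f(s)\,ds$ denotes the element $l_t\in E^*$ with $l_t(e)=\int_a^t f(s)(e)\,ds$ for all $e\in E$ (this element exists). *)

theory Defs
  imports "HOL-Analysis.Analysis"
begin

text \<open>A Frechet space is modelled as a real vector space whose topology is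
generated by a countable separating family of seminorms p n (n :: nat), complete
with respect to that family.\<close>

definition seminorm :: "('a::real_vector \<Rightarrow> real) \<Rightarrow> bool" where
  "seminorm q \<longleftrightarrow> (\<forall>x. 0 \<le> q x) \<and> (\<forall>x y. q (x + y) \<le> q x + q y)
     \<and> (\<forall>c x. q (c *\<^sub>R x) = \<bar>c\<bar> * q x)"

definition fr_open :: "(nat \<Rightarrow> 'a::real_vector \<Rightarrow> real) \<Rightarrow> 'a set \<Rightarrow> bool" where
  "fr_open p U \<longleftrightarrow> (\<forall>x\<in>U. \<exists>N. \<exists>\<epsilon>>0. {y. \<forall>n\<le>N. p n (y - x) < \<epsilon>} \<subseteq> U)"

definition fr_topology :: "(nat \<Rightarrow> 'a::real_vector \<Rightarrow> real) \<Rightarrow> 'a topology" where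
  "fr_topology p = topology (fr_open p)"

definition frechet_space :: "(nat \<Rightarrow> 'a::real_vector \<Rightarrow> real) \<Rightarrow> bool" where
  "frechet_space p \<longleftrightarrow> (\<forall>n. seminorm (p n))
     \<and> (\<forall>x. (\<forall>n. p n x = 0) \<longrightarrow> x = 0)
     \<and> (\<forall>X :: nat \<Rightarrow> 'a. (\<forall>n. \<forall>\<epsilon>>0. \<exists>M. \<forall>i\<ge>M. \<forall>j\<ge>M. p n (X i - X j) < \<epsilon>)
          \<longrightarrow> (\<exists>L. limitin (fr_topology p) X L sequentially))"

definition dual :: "(nat \<Rightarrow> 'a::real_vector \<Rightarrow> real) \<Rightarrow> ('a \<Rightarrow> real) set" where
  "dual p = {l. linear l \<and> continuous_map (fr_topology p) euclideanreal l}"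

definition C1_curve :: "(nat \<Rightarrow> 'a::real_vector \<Rightarrow> real) \<Rightarrow> real \<Rightarrow> real \<Rightarrow>
    (real \<Rightarrow> 'a) \<Rightarrow> (real \<Rightarrow> 'a) \<Rightarrow> bool" where
  "C1_curve p a b \<mu> \<mu>' \<longleftrightarrow>
     (\<forall>t\<in>{a..b}. limitin (fr_topology p) (\<lambda>s. inverse (s - t) *\<^sub>R (\<mu> s - \<mu> t)) (\<mu>' t)
                    (at t within {a..b}))
     \<and> continuous_map (subtopology euclideanreal {a..b}) (fr_topology p) \<mu>'"

text \<open>Weak* integral: (prim f a t) e = integral over [a,t] of f s e.\<close>
definition prim :: "(real \<Rightarrow> 'a \<Rightarrow> real) \<Rightarrow> real \<Rightarrow> real \<Rightarrow> 'a \<Rightarrow> real" where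
  "prim f a t = (\<lambda>e. integral {a..t} (\<lambda>s. f s e))"

end

theory Submission
  imports Defs
begin


lemma atin_within_euclidean: "atin_within euclidean t S = at t within S"
  by (rule filter_eq_iff[THEN iffD2]) (auto simp: eventually_atin_within eventually_at_topological)

lemma istop_fr: "istopology (fr_open p)"
  unfolding istopology_def
proof safe
  fix S T assume S: "fr_open p S" and T: "fr_open p T"
  show "fr_open p (S \<inter> T)"
    unfolding fr_open_def
  proof
    fix x assume x: "x \<in> S \<inter> T"
    obtain N1 e1 where 1: "e1 > 0" "{y. \<forall>n\<le>N1. p n (y - x) < e1} \<subseteq> S"
      using S x unfolding fr_open_def by blast
    obtain N2 e2 where 2: "e2 > 0" "{y. \<forall>n\<le>N2. p n (y - x) < e2} \<subseteq> T"
      using T x unfolding fr_open_def by blast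
    show "\<exists>N. \<exists>\<epsilon>>0. {y. \<forall>n\<le>N. p n (y - x) < \<epsilon>} \<subseteq> S \<inter> T"
    proof (intro exI conjI)
      show "min e1 e2 > 0" using 1 2 by simp
      show "{y. \<forall>n\<le>max N1 N2. p n (y - x) < min e1 e2} \<subseteq> S \<inter> T"
      proof
        fix y assume y: "y \<in> {y. \<forall>n\<le>max N1 N2. p n (y - x) < min e1 e2}"
        have "\<forall>n\<le>N1. p n (y - x) < e1"
        proof (intro allI impI)
          fix n assume "n \<le> N1" then have "n \<le> max N1 N2" by simp
          then have "p n (y - x) < min e1 e2" using y by blast
          then show "p n (y - x) < e1" by simp
        qed
        moreover have "\<forall>n\<le>N2. p n (y - x) < e2"
        proof (intro allI impI)
          fix n assume "n \<le> N2" then have "n \<le> max N1 N2" by simp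
          then have "p n (y - x) < min e1 e2" using y by blast
          then show "p n (y - x) < e2" by simp
        qed
        ultimately show "y \<in> S \<inter> T" using 1 2 by blast
      qed
    qed
  qed
next
  fix K assume "\<forall>K\<in>K. fr_open p K"
  then show "fr_open p (\<Union>K)" unfolding fr_open_def
  proof (intro ballI)
    fix x assume H: "\<forall>K\<in>K. \<forall>x\<in>K. \<exists>N. \<exists>\<epsilon>>0. {y. \<forall>n\<le>N. p n (y - x) < \<epsilon>} \<subseteq> K" and x: "x \<in> \<Union>K"
    then obtain K0 where K0: "K0 \<in> K" "x \<in> K0" by blast
    then obtain N e where "e > 0" "{y. \<forall>n\<le>N. p n (y - x) < e} \<subseteq> K0" using H by meson
    moreover have "K0 \<subseteq> \<Union>K" using K0 by blast
    ultimately show "\<exists>N. \<exists>\<epsilon>>0. {y. \<forall>n\<le>N. p n (y - x) < \<epsilon>} \<subseteq> \<Union>K" by blast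
  qed
qed

lemma openin_fr: "openin (fr_topology p) = fr_open p"
  by (simp add: fr_topology_def istop_fr)

lemma topspace_fr [simp]: "topspace (fr_topology p) = UNIV"
proof -
  have "fr_open p UNIV" by (auto simp: fr_open_def intro: exI[of _ 1])
  then have "UNIV \<subseteq> topspace (fr_topology p)" by (metis openin_fr openin_subset)
  then show ?thesis by blast
qed

lemma seminorm_props:
  assumes "seminorm q"
  shows "q 0 = 0" "q (- x) = q x" "q (x - y) = q (y - x)"
    "q (x - z) \<le> q (x - y) + q (y - z)" "q (c *\<^sub>R x) = \<bar>c\<bar> * q x" "q x \<ge> 0"
    "q (x + y) \<le> q x + q y"
proof -
  have sc: "\<And>c x. q (c *\<^sub>R x) = \<bar>c\<bar> * q x" using assms unfolding seminorm_def by blast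
  show "q 0 = 0" using sc[of 0 0] by simp
  show neg: "q (- x) = q x" for x using sc[of "-1" x] by simp
  show "q (x - y) = q (y - x)" using neg[of "x - y"] by simp
  have "q ((x - y) + (y - z)) \<le> q (x - y) + q (y - z)" using assms unfolding seminorm_def by blast
  then show "q (x - z) \<le> q (x - y) + q (y - z)" by simp
  show "q (c *\<^sub>R x) = \<bar>c\<bar> * q x" by (rule sc)
  show "q x \<ge> 0" "q (x + y) \<le> q x + q y" using assms unfolding seminorm_def by blast+
qed

definition bl :: "(nat \<Rightarrow> 'a::real_vector \<Rightarrow> real) \<Rightarrow> 'a \<Rightarrow> nat \<Rightarrow> real \<Rightarrow> 'a set" where
  "bl p x N e = {y. \<forall>n\<le>N. p n (y - x) < e}"

definition MM :: "(nat \<Rightarrow> 'a::real_vector \<Rightarrow> real) \<Rightarrow> nat \<Rightarrow> 'a \<Rightarrow> real" where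
  "MM p N y = Max ((\<lambda>n. p n y) ` {..N})"

lemma MM_ge: "n \<le> N \<Longrightarrow> p n y \<le> MM p N y"
  unfolding MM_def by (rule Max_ge) auto

lemma MM_less: "MM p N y < e \<longleftrightarrow> (\<forall>n\<le>N. p n y < e)"
  unfolding MM_def by (subst Max_less_iff) auto

lemma bl_open:
  assumes "\<forall>n. seminorm (p n)"
  shows "fr_open p (bl p x N e)"
  unfolding fr_open_def
proof
  fix y assume y: "y \<in> bl p x N e"
  define d where "d = e - MM p N (y - x)"
  have "MM p N (y - x) < e" using y by (simp add: bl_def MM_less)
  hence d: "d > 0" by (simp add: d_def)
  have "bl p y N d \<subseteq> bl p x N e"
  proof
    fix z assume z: "z \<in> bl p y N d"
    show "z \<in> bl p x N e" unfolding bl_def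
    proof safe
      fix n assume n: "n \<le> N"
      have "p n (z - x) \<le> p n (z - y) + p n (y - x)" using seminorm_props(4)[OF assms[rule_format]] .
      also have "\<dots> < d + MM p N (y - x)" using z n MM_ge[OF n, of p "y - x"] by (auto simp: bl_def)
      finally show "p n (z - x) < e" by (simp add: d_def)
    qed
  qed
  then show "\<exists>N'. \<exists>\<epsilon>>0. {ya. \<forall>n\<le>N'. p n (ya - y) < \<epsilon>} \<subseteq> bl p x N e"
    using d unfolding bl_def by blast
qed

lemma bl_center: "\<forall>n. seminorm (p n) \<Longrightarrow> e > 0 \<Longrightarrow> x \<in> bl p x N e"
  by (simp add: bl_def seminorm_props)

lemma limitin_fr_MM:
  assumes "\<forall>n. seminorm (p n)" "limitin (fr_topology p) X L F"
  shows "((\<lambda>i. MM p N (X i - L)) \<longlongrightarrow> 0) F"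
proof (rule tendstoI)
  fix e :: real assume e: "e > 0"
  have "eventually (\<lambda>i. X i \<in> bl p L N e) F"
    using assms(2) bl_open[OF assms(1)] bl_center[OF assms(1) e] unfolding limitin_def openin_fr by blast
  then show "eventually (\<lambda>i. dist (MM p N (X i - L)) 0 < e) F"
  proof (rule eventually_mono)
    fix i assume "X i \<in> bl p L N e"
    then have "MM p N (X i - L) < e" by (simp add: bl_def MM_less)
    moreover have "MM p N (X i - L) \<ge> 0"
      using MM_ge[of 0 N p] seminorm_props(6)[OF assms(1)[rule_format]] by (meson order_trans le0)
    ultimately show "dist (MM p N (X i - L)) 0 < e" by simp
  qed
qed

lemma MM_nonneg: "\<forall>n. seminorm (p n) \<Longrightarrow> MM p N y \<ge> 0"
  using MM_ge[of 0 N p y] seminorm_props(6)[of "p 0" y] by (meson order_trans le0)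

definition cb :: "(nat \<Rightarrow> 'a::real_vector \<Rightarrow> real) \<Rightarrow> 'a \<Rightarrow> nat \<Rightarrow> real \<Rightarrow> 'a set" where
  "cb p x N e = {y. \<forall>n\<le>N. p n (y - x) \<le> e}"

lemma baire_step:
  assumes sn: "\<forall>n. seminorm (p n)" and op: "fr_open p (- A)"
    and no: "\<not> (\<exists>x N e. e > 0 \<and> bl p x N e \<subseteq> A)" and e: "e > 0"
  shows "\<exists>x' N' e'. N' \<ge> N \<and> N' \<ge> m \<and> 0 < e' \<and> e' \<le> e/2 \<and> cb p x' N' e' \<subseteq> bl p x N e - A"
proof -
  obtain x' where x': "x' \<in> bl p x N e" "x' \<notin> A" using no e by blast
  obtain N1 e1 where 1: "e1 > 0" "{y. \<forall>n\<le>N1. p n (y - x') < e1} \<subseteq> - A"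
    using op x' unfolding fr_open_def by blast
  obtain N2 e2 where 2: "e2 > 0" "{y. \<forall>n\<le>N2. p n (y - x') < e2} \<subseteq> bl p x N e"
    using bl_open[OF sn, of x N e] x' unfolding fr_open_def by blast
  define N' where "N' = max (max N1 N2) (max N m)"
  define e' where "e' = min (min e1 e2) e / 2"
  have "cb p x' N' e' \<subseteq> bl p x N e - A"
  proof
    fix y assume y: "y \<in> cb p x' N' e'"
    have lt: "e' < e1" "e' < e2" using 1 2 e by (simp_all add: e'_def)
    have yy: "\<And>n. n \<le> N' \<Longrightarrow> p n (y - x') \<le> e'" using y by (simp add: cb_def)
    have "\<forall>n\<le>N1. p n (y - x') < e1"
    proof safe
      fix n assume "n \<le> N1" then have "n \<le> N'" by (simp add: N'_def)
      then show "p n (y - x') < e1" using yy lt by fastforce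
    qed
    moreover have "\<forall>n\<le>N2. p n (y - x') < e2"
    proof safe
      fix n assume "n \<le> N2" then have "n \<le> N'" by (simp add: N'_def)
      then show "p n (y - x') < e2" using yy lt by fastforce
    qed
    ultimately show "y \<in> bl p x N e - A" using 1 2 by blast
  qed
  moreover have "N' \<ge> N" "N' \<ge> m" "0 < e'" "e' \<le> e/2" using 1 2 e by (auto simp: N'_def e'_def)
  ultimately show ?thesis by blast
qed

lemma baire_fr:
  fixes p :: "nat \<Rightarrow> 'a::real_vector \<Rightarrow> real" and A :: "nat \<Rightarrow> 'a set"
  assumes sn: "\<forall>n. seminorm (p n)"
    and cpl: "\<forall>X :: nat \<Rightarrow> 'a. (\<forall>n. \<forall>\<epsilon>>0. \<exists>M. \<forall>i\<ge>M. \<forall>j\<ge>M. p n (X i - X j) < \<epsilon>)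
          \<longrightarrow> (\<exists>L. limitin (fr_topology p) X L sequentially)"
    and op: "\<forall>k. fr_open p (- A k)"
    and cov: "\<forall>x. \<exists>k. x \<in> A k"
  shows "\<exists>k x N e. e > 0 \<and> bl p x N e \<subseteq> A k"
proof (rule ccontr)
  assume no: "\<not> ?thesis"
  define P where "P k s s' \<longleftrightarrow> fst (snd s') \<ge> fst (snd s) \<and> fst (snd s') \<ge> k \<and> 0 < snd (snd s')
     \<and> snd (snd s') \<le> snd (snd s) / 2 \<and> cb p (fst s') (fst (snd s')) (snd (snd s'))
        \<subseteq> bl p (fst s) (fst (snd s)) (snd (snd s)) - A k" for k and s s' :: "'a \<times> nat \<times> real"
  define nxt where "nxt k s = (SOME s'. P k s s')" for k s
  have ex: "P k s (nxt k s)" if pos0: "snd (snd s) > 0" for k s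
  proof -
    have nok: "\<not> (\<exists>x N e. e > 0 \<and> bl p x N e \<subseteq> A k)" using no by blast
    obtain x' N' e' where "N' \<ge> fst (snd s) \<and> N' \<ge> k \<and> 0 < e' \<and> e' \<le> snd (snd s)/2 \<and>
       cb p x' N' e' \<subseteq> bl p (fst s) (fst (snd s)) (snd (snd s)) - A k"
      using baire_step[OF sn op[rule_format, of k] nok pos0, of "fst (snd s)" k "fst s"] by blast
    then have "P k s (x', N', e')" by (simp add: P_def)
    then show ?thesis unfolding nxt_def by (rule someI)
  qed
  define S where "S = rec_nat ((0::'a), (0::nat), (1::real)) nxt"
  have S0: "S 0 = (0, 0, 1)" and SS: "S (Suc k) = nxt k (S k)" for k by (simp_all add: S_def)
  define xs where "xs k = fst (S k)" for k
  define Ns where "Ns k = fst (snd (S k))" for k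
  define es where "es k = snd (snd (S k))" for k
  have pos: "es k > 0" for k
  proof (induction k)
    case 0 then show ?case by (simp add: es_def S0)
  next
    case (Suc k)
    then have "P k (S k) (S (Suc k))" using ex[of "S k" k] by (simp add: es_def SS)
    then show ?case by (simp add: P_def es_def)
  qed
  have PS: "P k (S k) (S (Suc k))" for k using ex[of "S k" k] pos[of k] by (simp add: es_def SS)
  have Nsuc: "Ns (Suc k) \<ge> k" for k using PS[of k] by (simp add: P_def Ns_def)
  have esuc: "es (Suc k) \<le> es k / 2" for k using PS[of k] by (simp add: P_def es_def)
  have cbsuc: "cb p (xs (Suc k)) (Ns (Suc k)) (es (Suc k)) \<subseteq> bl p (xs k) (Ns k) (es k) - A k" for k
    using PS[of k] by (simp add: P_def es_def xs_def Ns_def)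
  have bl_cb: "bl p x N e \<subseteq> cb p x N e" for x N e by (auto simp: bl_def cb_def less_imp_le)
  have esb: "es k \<le> (1/2)^k" for k
  proof (induction k)
    case 0 then show ?case by (simp add: es_def S0)
  next
    case (Suc k) then show ?case using esuc[of k] by simp
  qed
  have nest: "cb p (xs j) (Ns j) (es j) \<subseteq> cb p (xs k) (Ns k) (es k)" if "k \<le> j" for j k
    using that
  proof (induction j rule: dec_induct)
    case base then show ?case by simp
  next
    case (step j) then show ?case using cbsuc[of j] bl_cb by blast
  qed
  have center: "xs j \<in> cb p (xs j) (Ns j) (es j)" for j
    using pos[of j] by (simp add: cb_def seminorm_props(1)[OF sn[rule_format]] less_imp_le)
  have inc: "\<forall>n\<le>Ns k. p n (xs j - xs k) \<le> es k" if "k \<le> j" for j k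
  proof -
    have "xs j \<in> cb p (xs k) (Ns k) (es k)" using nest[OF that] center[of j] by blast
    then show ?thesis by (simp add: cb_def)
  qed
  have "\<forall>n. \<forall>\<epsilon>>0. \<exists>M. \<forall>i\<ge>M. \<forall>j\<ge>M. p n (xs i - xs j) < \<epsilon>"
  proof (intro allI impI)
    fix n and d :: real assume d: "d > 0"
    obtain K where K: "(1/2::real)^K < d/2" using real_arch_pow_inv[of "d/2" "1/2::real"] d by auto
    define M where "M = Suc (max n K)"
    have nM: "n \<le> Ns M" using Nsuc[of "max n K"] by (simp add: M_def)
    have "(1/2::real)^M \<le> (1/2)^K"
      by (rule power_decreasing) (auto simp: M_def)
    then have "es M \<le> (1/2)^K" using esb[of M] by linarith
    show "\<exists>M. \<forall>i\<ge>M. \<forall>j\<ge>M. p n (xs i - xs j) < d"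
    proof (intro exI allI impI)
      fix i j assume ij: "M \<le> i" "M \<le> j"
      have "p n (xs i - xs j) \<le> p n (xs i - xs M) + p n (xs M - xs j)"
        by (rule seminorm_props(4)[OF sn[rule_format]])
      also have "p n (xs M - xs j) = p n (xs j - xs M)"
        by (rule seminorm_props(3)[OF sn[rule_format]])
      finally show "p n (xs i - xs j) < d"
        using inc[OF ij(1)] inc[OF ij(2)] nM \<open>es M \<le> (1/2)^K\<close> K by fastforce
    qed
  qed
  then obtain L where L: "limitin (fr_topology p) xs L sequentially" using cpl by blast
  have Lcb: "L \<in> cb p (xs k) (Ns k) (es k)" for k
    unfolding cb_def
  proof safe
    fix n assume n: "n \<le> Ns k"
    show "p n (L - xs k) \<le> es k"
    proof (rule field_le_epsilon)
      fix d :: real assume d: "d > 0"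
      have "eventually (\<lambda>i. dist (MM p n (xs i - L)) 0 < d) sequentially"
        using limitin_fr_MM[OF sn L, of n] d by (simp add: tendsto_iff)
      then obtain i0 where i0: "\<And>i. i \<ge> i0 \<Longrightarrow> dist (MM p n (xs i - L)) 0 < d"
        by (auto simp: eventually_sequentially)
      define i where "i = max i0 k"
      have "p n (xs i - L) \<le> MM p n (xs i - L)" by (rule MM_ge) simp
      also have "\<dots> < d" using i0[of i] by (simp add: i_def)
      finally have 1: "p n (L - xs i) < d" using seminorm_props(3)[OF sn[rule_format], of n "xs i" L] by simp
      have 2: "p n (xs i - xs k) \<le> es k" using inc[of k i] n by (simp add: i_def)
      have "p n (L - xs k) \<le> p n (L - xs i) + p n (xs i - xs k)"
        by (rule seminorm_props(4)[OF sn[rule_format]])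
      then show "p n (L - xs k) \<le> es k + d" using 1 2 by simp
    qed
  qed
  obtain k where "L \<in> A k" using cov by blast
  moreover have "L \<notin> A k" using Lcb[of "Suc k"] cbsuc[of k] by blast
  ultimately show False by blast
qed



lemma equicont:
  fixes p :: "nat \<Rightarrow> 'a::real_vector \<Rightarrow> real" and f :: "real \<Rightarrow> 'a \<Rightarrow> real"
  assumes fs: "frechet_space p" and fd: "\<forall>r\<in>{a..b}. f r \<in> dual p"
    and fc: "\<forall>e. continuous_on {a..b} (\<lambda>r. f r e)"
  shows "\<exists>C N. C > 0 \<and> (\<forall>r\<in>{a..b}. \<forall>y. \<bar>f r y\<bar> \<le> C * MM p N y)"
proof -
  have sn: "\<forall>n. seminorm (p n)" using fs by (simp add: frechet_space_def)
  define A where "A k = {x. \<forall>r\<in>{a..b}. \<bar>f r x\<bar> \<le> real k}" for k :: nat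
  have cov: "\<forall>x. \<exists>k. x \<in> A k"
  proof
    fix x
    have "compact ((\<lambda>r. f r x) ` {a..b})"
      by (rule compact_continuous_image) (use fc in auto)
    then obtain B where B: "\<forall>u\<in>(\<lambda>r. f r x) ` {a..b}. norm u \<le> B"
      using compact_imp_bounded[of "(\<lambda>r. f r x) ` {a..b}"] unfolding bounded_iff by blast
    have "\<forall>r\<in>{a..b}. \<bar>f r x\<bar> \<le> real (nat \<lceil>B\<rceil>)"
    proof
      fix r assume "r \<in> {a..b}"
      then have "\<bar>f r x\<bar> \<le> B" using B by simp
      then show "\<bar>f r x\<bar> \<le> real (nat \<lceil>B\<rceil>)" using real_nat_ceiling_ge[of B] by linarith
    qed
    then show "\<exists>k. x \<in> A k" by (auto simp: A_def)
  qed
  have op: "\<forall>k. fr_open p (- A k)"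
  proof
    fix k
    show "fr_open p (- A k)"
      unfolding fr_open_def
    proof
      fix x assume "x \<in> - A k"
      then obtain r where r: "r \<in> {a..b}" "\<bar>f r x\<bar> > real k" by (auto simp: A_def not_le)
      have cm: "continuous_map (fr_topology p) euclideanreal (f r)" using fd r by (simp add: dual_def)
      have "open {u::real. real k < \<bar>u\<bar>}" by (intro open_Collect_less continuous_intros)
      then have "openin (fr_topology p) {y \<in> topspace (fr_topology p). f r y \<in> {u::real. real k < \<bar>u\<bar>}}"
        by (intro openin_continuous_map_preimage[OF cm]) simp
      then have "fr_open p {y. real k < \<bar>f r y\<bar>}" by (simp add: openin_fr)
      then obtain N e where "e > 0" "{y. \<forall>n\<le>N. p n (y - x) < e} \<subseteq> {y. real k < \<bar>f r y\<bar>}"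
        using r unfolding fr_open_def by blast
      moreover have "{y. real k < \<bar>f r y\<bar>} \<subseteq> - A k" using r unfolding A_def by force
      ultimately show "\<exists>N. \<exists>\<epsilon>>0. {y. \<forall>n\<le>N. p n (y - x) < \<epsilon>} \<subseteq> - A k" by blast
    qed
  qed
  obtain k x0 N e where e: "e > 0" and sub: "bl p x0 N e \<subseteq> A k"
  proof -
    have cpl: "\<forall>X :: nat \<Rightarrow> 'a. (\<forall>n. \<forall>\<epsilon>>0. \<exists>M. \<forall>i\<ge>M. \<forall>j\<ge>M. p n (X i - X j) < \<epsilon>)
          \<longrightarrow> (\<exists>L. limitin (fr_topology p) X L sequentially)" using fs by (simp add: frechet_space_def)
    show ?thesis using baire_fr[OF sn cpl op cov] that by blast
  qed
  define C where "C = (2 * real k + 1) / e"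
  have C: "C > 0" using e by (simp add: C_def)
  have "x0 \<in> A k" using sub bl_center[OF sn e] by blast
  then have x0: "\<forall>r\<in>{a..b}. \<bar>f r x0\<bar> \<le> real k" by (simp add: A_def)
  have "\<forall>r\<in>{a..b}. \<forall>y. \<bar>f r y\<bar> \<le> C * MM p N y"
  proof (intro ballI allI)
    fix r y assume r: "r \<in> {a..b}"
    have lin: "linear (f r)" using fd r by (simp add: dual_def)
    have M0: "MM p N y \<ge> 0" by (rule MM_nonneg[OF sn])
    have main: "\<bar>f r y\<bar> \<le> C * (MM p N y + d)" if d: "d > 0" for d
    proof -
      define s where "s = e / (MM p N y + d)"
      have s: "s > 0" using e d M0 by (simp add: s_def)
      have "x0 + s *\<^sub>R y \<in> bl p x0 N e"
        unfolding bl_def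
      proof safe
        fix n assume n: "n \<le> N"
        have "p n (x0 + s *\<^sub>R y - x0) = s * p n y"
          using seminorm_props(5)[OF sn[rule_format], of n s y] s by simp
        also have "\<dots> \<le> s * MM p N y" using MM_ge[OF n] s by (simp add: mult_left_mono)
        also have "\<dots> < s * (MM p N y + d)" using s d by simp
        also have "\<dots> = e" using d M0 by (simp add: s_def)
        finally show "p n (x0 + s *\<^sub>R y - x0) < e" .
      qed
      then have "x0 + s *\<^sub>R y \<in> A k" using sub by blast
      then have "\<bar>f r (x0 + s *\<^sub>R y)\<bar> \<le> real k" using r by (simp add: A_def)
      moreover have "f r (x0 + s *\<^sub>R y) = f r x0 + s * f r y"
        using linear_add[OF lin] linear_scale[OF lin] by simp
      ultimately have 1: "\<bar>f r x0 + s * f r y\<bar> \<le> real k" by simp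
      have 2: "\<bar>f r x0\<bar> \<le> real k" using x0 r by blast
      have "\<bar>s * f r y\<bar> \<le> \<bar>f r x0 + s * f r y\<bar> + \<bar>f r x0\<bar>" by linarith
      then have "\<bar>s * f r y\<bar> \<le> 2 * real k" using 1 2 by linarith
      then have "s * \<bar>f r y\<bar> \<le> 2 * real k" using s by (simp add: abs_mult)
      then have "\<bar>f r y\<bar> \<le> 2 * real k / s" using s by (simp add: field_simps)
      also have "\<dots> = 2 * real k * (MM p N y + d) / e" using e d M0 by (simp add: s_def)
      also have "\<dots> \<le> C * (MM p N y + d)" using e d M0 by (simp add: C_def field_simps)
      finally show ?thesis .
    qed
    show "\<bar>f r y\<bar> \<le> C * MM p N y"
    proof (rule field_le_epsilon)
      fix d :: real assume d: "d > 0"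
      have "\<bar>f r y\<bar> \<le> C * (MM p N y + d / C)" using main[of "d / C"] d C by simp
      moreover have "C * (MM p N y + d / C) = C * MM p N y + d" using C by (simp add: distrib_left)
      ultimately show "\<bar>f r y\<bar> \<le> C * MM p N y + d" by simp
    qed
  qed
  then show ?thesis using C by blast
qed



lemma prim_lin:
  assumes fd: "\<forall>r\<in>{a..b}. f r \<in> dual p" and fc: "\<forall>e. continuous_on {a..b} (\<lambda>r. f r e)"
    and s: "s \<in> {a..b}"
  shows "prim f a s (u - v) = prim f a s u - prim f a s v"
    and "prim f a s (c *\<^sub>R u) = c * prim f a s u"
    and "prim f a s 0 = 0"
proof -
  have lin: "\<And>r. r \<in> {a..s} \<Longrightarrow> linear (f r)" using fd s by (auto simp: dual_def)
  have int: "\<And>e. (\<lambda>r. f r e) integrable_on {a..s}"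
    by (rule integrable_continuous_interval, rule continuous_on_subset[OF fc[rule_format]]) (use s in auto)
  have "prim f a s (u - v) = integral {a..s} (\<lambda>r. f r u - f r v)"
    unfolding prim_def by (rule integral_cong) (simp add: linear_diff[OF lin])
  also have "\<dots> = prim f a s u - prim f a s v"
    unfolding prim_def by (rule Henstock_Kurzweil_Integration.integral_diff[OF int int])
  finally show "prim f a s (u - v) = prim f a s u - prim f a s v" .
  have "prim f a s (c *\<^sub>R u) = integral {a..s} (\<lambda>r. c * f r u)"
    unfolding prim_def by (rule integral_cong) (simp add: linear_scale[OF lin])
  also have "\<dots> = c * prim f a s u" by (simp add: prim_def)
  finally show "prim f a s (c *\<^sub>R u) = c * prim f a s u" .
  have "prim f a s 0 = integral {a..s} (\<lambda>r. 0)"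
    unfolding prim_def by (rule integral_cong) (simp add: linear_0[OF lin])
  then show "prim f a s 0 = 0" by simp
qed

lemma prim_bound:
  assumes fc: "\<forall>e. continuous_on {a..b} (\<lambda>r. f r e)"
    and bd: "\<forall>r\<in>{a..b}. \<bar>f r y\<bar> \<le> B" and s: "s \<in> {a..b}"
  shows "\<bar>prim f a s y\<bar> \<le> B * (b - a)"
proof -
  have "norm (integral {a..s} (\<lambda>r. f r y)) \<le> B * (s - a)"
    by (rule integral_bound) (use s bd in \<open>auto intro: continuous_on_subset[OF fc[rule_format]]\<close>)
  moreover have "B \<ge> 0" using bd s by (meson abs_ge_zero order_trans)
  then have "B * (s - a) \<le> B * (b - a)" using s by (simp add: mult_left_mono)
  ultimately show ?thesis by (simp add: prim_def)
qed

lemma prim_deriv: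
  assumes fc: "\<forall>e. continuous_on {a..b} (\<lambda>r. f r e)" and t: "t \<in> {a..b}"
  shows "((\<lambda>s. prim f a s y) has_real_derivative f t y) (at t within {a..b})"
  unfolding prim_def has_real_derivative_iff_has_vector_derivative
  by (rule integral_has_vector_derivative[OF fc[rule_format] t])

lemma deriv_main:
  fixes p :: "nat \<Rightarrow> 'a::real_vector \<Rightarrow> real" and f :: "real \<Rightarrow> 'a \<Rightarrow> real"
  assumes fs: "frechet_space p" and fd: "\<forall>r\<in>{a..b}. f r \<in> dual p"
    and fc: "\<forall>e. continuous_on {a..b} (\<lambda>r. f r e)"
    and cd: "c \<in> dual p" and C1: "C1_curve p a b \<mu> \<mu>'" and t: "t \<in> {a..b}"
  shows "((\<lambda>s. c (\<mu> s) + prim f a s (\<mu> s)) has_real_derivative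
           (c (\<mu>' t) + prim f a t (\<mu>' t) + f t (\<mu> t))) (at t within {a..b})"
proof -
  have sn: "\<forall>n. seminorm (p n)" using fs by (simp add: frechet_space_def)
  obtain C N where C: "C > 0" and bd: "\<forall>r\<in>{a..b}. \<forall>y. \<bar>f r y\<bar> \<le> C * MM p N y"
    using equicont[OF fs fd fc] by blast
  define q where "q s = inverse (s - t) *\<^sub>R (\<mu> s - \<mu> t)" for s
  have L: "limitin (fr_topology p) q (\<mu>' t) (at t within {a..b})"
    using C1 t unfolding C1_curve_def q_def by blast
  have clin: "linear c" and cm: "continuous_map (fr_topology p) euclideanreal c"
    using cd by (auto simp: dual_def)
  define F where "F = at t within {a..b}"
  have ev: "eventually (\<lambda>s. s \<in> {a..b} \<and> s \<noteq> t) F"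
    unfolding F_def eventually_at_filter by simp
  have l1: "((\<lambda>s. c (q s)) \<longlongrightarrow> c (\<mu>' t)) F"
    using continuous_map_limit[OF cm L] by (simp add: F_def o_def)
  have l2a: "((\<lambda>s. prim f a s (q s - \<mu>' t)) \<longlongrightarrow> 0) F"
  proof (rule Lim_null_comparison)
    show "eventually (\<lambda>s. norm (prim f a s (q s - \<mu>' t)) \<le> C * MM p N (q s - \<mu>' t) * (b - a)) F"
      using ev
    proof (rule eventually_mono)
      fix s assume "s \<in> {a..b} \<and> s \<noteq> t"
      then show "norm (prim f a s (q s - \<mu>' t)) \<le> C * MM p N (q s - \<mu>' t) * (b - a)"
        using prim_bound[OF fc, of "q s - \<mu>' t" "C * MM p N (q s - \<mu>' t)" s] bd by auto
    qed
    have "((\<lambda>s. MM p N (q s - \<mu>' t)) \<longlongrightarrow> 0) F"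
      using limitin_fr_MM[OF sn L] by (simp add: F_def)
    then show "((\<lambda>s. C * MM p N (q s - \<mu>' t) * (b - a)) \<longlongrightarrow> 0) F"
      by (auto intro!: tendsto_eq_intros)
  qed
  have l2b: "((\<lambda>s. prim f a s (\<mu>' t)) \<longlongrightarrow> prim f a t (\<mu>' t)) F"
    using DERIV_continuous[OF prim_deriv[OF fc t, of "\<mu>' t"]] by (simp add: F_def continuous_within)
  have l2: "((\<lambda>s. prim f a s (q s)) \<longlongrightarrow> prim f a t (\<mu>' t)) F"
  proof -
    have "((\<lambda>s. prim f a s (q s - \<mu>' t) + prim f a s (\<mu>' t)) \<longlongrightarrow> 0 + prim f a t (\<mu>' t)) F"
      by (rule tendsto_add[OF l2a l2b])
    moreover have "eventually (\<lambda>s. prim f a s (q s - \<mu>' t) + prim f a s (\<mu>' t) = prim f a s (q s)) F"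
      using ev by (rule eventually_mono) (simp add: prim_lin(1)[OF fd fc])
    ultimately show ?thesis by (simp add: tendsto_cong)
  qed
  have l3: "((\<lambda>s. (prim f a s (\<mu> t) - prim f a t (\<mu> t)) / (s - t)) \<longlongrightarrow> f t (\<mu> t)) F"
    using prim_deriv[OF fc t, of "\<mu> t"] unfolding has_field_derivative_iff F_def .
  have lim: "((\<lambda>s. c (q s) + prim f a s (q s) + (prim f a s (\<mu> t) - prim f a t (\<mu> t)) / (s - t))
      \<longlongrightarrow> c (\<mu>' t) + prim f a t (\<mu>' t) + f t (\<mu> t)) F"
    by (intro tendsto_add l1 l2 l3)
  have eq: "eventually (\<lambda>s. c (q s) + prim f a s (q s) + (prim f a s (\<mu> t) - prim f a t (\<mu> t)) / (s - t)
     = ((c (\<mu> s) + prim f a s (\<mu> s)) - (c (\<mu> t) + prim f a t (\<mu> t))) / (s - t)) F"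
    using ev
  proof (rule eventually_mono)
    fix s assume s: "s \<in> {a..b} \<and> s \<noteq> t"
    have "c (q s) = (c (\<mu> s) - c (\<mu> t)) / (s - t)"
      by (simp add: q_def linear_scale[OF clin] linear_diff[OF clin] divide_inverse mult.commute)
    moreover have "prim f a s (q s) = (prim f a s (\<mu> s) - prim f a s (\<mu> t)) / (s - t)"
      using s by (simp add: q_def prim_lin[OF fd fc] divide_inverse mult.commute)
    ultimately show "c (q s) + prim f a s (q s) + (prim f a s (\<mu> t) - prim f a t (\<mu> t)) / (s - t)
     = ((c (\<mu> s) + prim f a s (\<mu> s)) - (c (\<mu> t) + prim f a t (\<mu> t))) / (s - t)"
      by (simp add: diff_divide_distrib add_divide_distrib)
  qed
  show ?thesis
    unfolding has_field_derivative_iff using tendsto_cong[OF eq] lim by (simp add: F_def)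
qed



lemma scal_limit:
  assumes sn: "\<forall>n. seminorm (p n)" and lim: "(u \<longlongrightarrow> v) F"
  shows "limitin (fr_topology p) (\<lambda>s. u s *\<^sub>R e) (v *\<^sub>R e) F"
  unfolding limitin_def
proof (intro conjI allI impI)
  show "v *\<^sub>R e \<in> topspace (fr_topology p)" by simp
  fix U assume U: "openin (fr_topology p) U \<and> v *\<^sub>R e \<in> U"
  then obtain N d where d: "d > 0" "{y. \<forall>n\<le>N. p n (y - v *\<^sub>R e) < d} \<subseteq> U"
    unfolding openin_fr fr_open_def by blast
  define K where "K = MM p N e + 1"
  have K: "K > 0" using MM_nonneg[OF sn, of N e] by (simp add: K_def)
  have "eventually (\<lambda>s. dist (u s) v < d / K) F"
    using lim d K by (simp add: tendsto_iff)
  then show "eventually (\<lambda>s. u s *\<^sub>R e \<in> U) F"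
  proof (rule eventually_mono)
    fix s assume s: "dist (u s) v < d / K"
    have "\<forall>n\<le>N. p n (u s *\<^sub>R e - v *\<^sub>R e) < d"
    proof (intro allI impI)
      fix n assume n: "n \<le> N"
      have "p n (u s *\<^sub>R e - v *\<^sub>R e) = \<bar>u s - v\<bar> * p n e"
        using seminorm_props(5)[OF sn[rule_format], of n "u s - v" e] by (simp add: scaleR_diff_left)
      also have "\<dots> \<le> \<bar>u s - v\<bar> * K"
        using MM_ge[OF n, of p e] by (intro mult_left_mono) (auto simp: K_def)
      also have "\<dots> < d / K * K" using s K by (intro mult_strict_right_mono) (auto simp: dist_real_def)
      also have "\<dots> = d" using K by simp
      finally show "p n (u s *\<^sub>R e - v *\<^sub>R e) < d" .
    qed
    then show "u s *\<^sub>R e \<in> U" using d by blast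
  qed
qed

lemma fwd_e:
  fixes p :: "nat \<Rightarrow> 'a::real_vector \<Rightarrow> real"
    and f g :: "real \<Rightarrow> 'a \<Rightarrow> real" and a b :: real
  assumes fs: "frechet_space p"
    and ab: "a < b"
    and fd: "\<forall>t\<in>{a..b}. f t \<in> dual p" and gd: "\<forall>t\<in>{a..b}. g t \<in> dual p"
    and fc: "\<forall>e. continuous_on {a..b} (\<lambda>t. f t e)"
    and gc: "\<forall>e. continuous_on {a..b} (\<lambda>t. g t e)"
    and hyp: "\<forall>\<mu> \<mu>'. C1_curve p a b \<mu> \<mu>' \<and> \<mu> a = 0 \<and> \<mu> b = 0 \<longrightarrow>
            integral {a..b} (\<lambda>t. f t (\<mu> t) + g t (\<mu>' t)) = 0"
  shows "\<forall>t\<in>{a..b}. g t e - prim f a t e = g a e - prim f a a e"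
proof -
  have sn: "\<forall>n. seminorm (p n)" using fs by (simp add: frechet_space_def)
  define Fe where "Fe t = prim f a t e" for t
  have Fe_d: "(Fe has_real_derivative f t e) (at t within {a..b})" if "t \<in> {a..b}" for t
    unfolding Fe_def by (rule prim_deriv[OF fc that])
  have Fe_c: "continuous_on {a..b} Fe"
    unfolding continuous_on_eq_continuous_within using Fe_d DERIV_continuous by blast
  have fec: "continuous_on {a..b} (\<lambda>t. f t e)" and gec: "continuous_on {a..b} (\<lambda>t. g t e)"
    using fc gc by auto
  define H where "H t = g t e - Fe t" for t
  have Hc: "continuous_on {a..b} H" unfolding H_def by (intro continuous_on_diff gec Fe_c)
  define m where "m = integral {a..b} H / (b - a)"
  define \<psi> where "\<psi> t = H t - m" for t
  have \<psi>c: "continuous_on {a..b} \<psi>" unfolding \<psi>_def by (intro continuous_on_diff Hc continuous_on_const)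
  define \<phi> where "\<phi> t = integral {a..t} \<psi>" for t
  have \<phi>_d: "(\<phi> has_real_derivative \<psi> t) (at t within {a..b})" if "t \<in> {a..b}" for t
    unfolding \<phi>_def has_real_derivative_iff_has_vector_derivative
    by (rule integral_has_vector_derivative[OF \<psi>c that])
  have \<phi>c: "continuous_on {a..b} \<phi>"
    unfolding continuous_on_eq_continuous_within using \<phi>_d DERIV_continuous by blast
  have \<phi>a: "\<phi> a = 0" by (simp add: \<phi>_def)
  have intH: "H integrable_on {a..b}" by (rule integrable_continuous_interval[OF Hc])
  have int\<psi>: "integral {a..b} \<psi> = 0"
  proof -
    have "integral {a..b} \<psi> = integral {a..b} H - integral {a..b} (\<lambda>t. m)"
      unfolding \<psi>_def by (rule Henstock_Kurzweil_Integration.integral_diff[OF intH]) (rule integrable_const_ivl)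
    also have "\<dots> = 0" using ab by (simp add: m_def content_real)
    finally show ?thesis .
  qed
  have \<phi>b: "\<phi> b = 0" using int\<psi> by (simp add: \<phi>_def)
  define \<mu> where "\<mu> t = \<phi> t *\<^sub>R e" for t
  define \<mu>' where "\<mu>' t = \<psi> t *\<^sub>R e" for t
  have C1: "C1_curve p a b \<mu> \<mu>'"
    unfolding C1_curve_def
  proof (intro conjI ballI)
    fix t assume t: "t \<in> {a..b}"
    have "((\<lambda>s. (\<phi> s - \<phi> t) / (s - t)) \<longlongrightarrow> \<psi> t) (at t within {a..b})"
      using \<phi>_d[OF t] unfolding has_field_derivative_iff .
    then have "limitin (fr_topology p) (\<lambda>s. ((\<phi> s - \<phi> t) / (s - t)) *\<^sub>R e) (\<psi> t *\<^sub>R e) (at t within {a..b})"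
      by (rule scal_limit[OF sn])
    moreover have "(\<lambda>s. ((\<phi> s - \<phi> t) / (s - t)) *\<^sub>R e) = (\<lambda>s. inverse (s - t) *\<^sub>R (\<mu> s - \<mu> t))"
      by (simp add: fun_eq_iff \<mu>_def divide_inverse scaleR_diff_left[symmetric] mult.commute)
    ultimately show "limitin (fr_topology p) (\<lambda>s. inverse (s - t) *\<^sub>R (\<mu> s - \<mu> t)) (\<mu>' t) (at t within {a..b})"
      by (simp add: \<mu>'_def)
  next
    show "continuous_map (subtopology euclideanreal {a..b}) (fr_topology p) \<mu>'"
      unfolding continuous_map_atin
    proof
      fix t assume "t \<in> topspace (subtopology euclideanreal {a..b})"
      then have t: "t \<in> {a..b}" by simp
      have "(\<psi> \<longlongrightarrow> \<psi> t) (at t within {a..b})" using \<psi>c t by (simp add: continuous_on_def)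
      then have "limitin (fr_topology p) \<mu>' (\<mu>' t) (at t within {a..b})"
        unfolding \<mu>'_def by (rule scal_limit[OF sn])
      then show "limitin (fr_topology p) \<mu>' (\<mu>' t) (atin (subtopology euclideanreal {a..b}) t)"
        by (simp add: atin_subtopology_within[OF t] atin_within_euclidean)
    qed
  qed
  have "integral {a..b} (\<lambda>t. f t (\<mu> t) + g t (\<mu>' t)) = 0"
  proof -
    have "\<mu> a = 0" "\<mu> b = 0" using \<phi>a \<phi>b by (simp_all add: \<mu>_def)
    then show ?thesis using hyp C1 by blast
  qed
  moreover have "integral {a..b} (\<lambda>t. f t (\<mu> t) + g t (\<mu>' t)) = integral {a..b} (\<lambda>t. \<phi> t * f t e + \<psi> t * g t e)"
  proof (rule integral_cong)
    fix t assume t: "t \<in> {a..b}"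
    have "linear (f t)" "linear (g t)" using fd gd t by (auto simp: dual_def)
    then show "f t (\<mu> t) + g t (\<mu>' t) = \<phi> t * f t e + \<psi> t * g t e"
      by (simp add: \<mu>_def \<mu>'_def linear_scale)
  qed
  ultimately have I1: "integral {a..b} (\<lambda>t. \<phi> t * f t e + \<psi> t * g t e) = 0" by simp
  have "((\<lambda>t. f t e * \<phi> t + \<psi> t * Fe t) has_integral (Fe b * \<phi> b - Fe a * \<phi> a)) {a..b}"
  proof (rule fundamental_theorem_of_calculus)
    show "a \<le> b" using ab by simp
    fix t assume t: "t \<in> {a..b}"
    show "((\<lambda>t. Fe t * \<phi> t) has_vector_derivative f t e * \<phi> t + \<psi> t * Fe t) (at t within {a..b})"
      unfolding has_real_derivative_iff_has_vector_derivative[symmetric]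
      by (rule DERIV_mult[OF Fe_d[OF t] \<phi>_d[OF t]])
  qed
  then have I2: "integral {a..b} (\<lambda>t. f t e * \<phi> t + \<psi> t * Fe t) = 0"
    using \<phi>a \<phi>b by (simp add: integral_unique)
  have i1: "(\<lambda>t. \<phi> t * f t e + \<psi> t * g t e) integrable_on {a..b}"
    by (intro integrable_continuous_interval continuous_intros \<phi>c \<psi>c fec gec)
  have i2: "(\<lambda>t. f t e * \<phi> t + \<psi> t * Fe t) integrable_on {a..b}"
    by (intro integrable_continuous_interval continuous_intros \<phi>c \<psi>c fec Fe_c)
  have I3: "integral {a..b} (\<lambda>t. \<psi> t * H t) = 0"
  proof -
    have "integral {a..b} (\<lambda>t. \<psi> t * H t)
        = integral {a..b} (\<lambda>t. (\<phi> t * f t e + \<psi> t * g t e) - (f t e * \<phi> t + \<psi> t * Fe t))"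
      by (rule integral_cong) (simp add: H_def algebra_simps)
    also have "\<dots> = 0" unfolding Henstock_Kurzweil_Integration.integral_diff[OF i1 i2] using I1 I2 by simp
    finally show ?thesis .
  qed
  have I5: "integral {a..b} (\<lambda>t. \<psi> t * \<psi> t) = 0"
  proof -
    have i3: "(\<lambda>t. \<psi> t * H t) integrable_on {a..b}"
      by (intro integrable_continuous_interval continuous_intros \<psi>c Hc)
    have i4: "(\<lambda>t. m * \<psi> t) integrable_on {a..b}"
      by (intro integrable_continuous_interval continuous_intros \<psi>c)
    have "integral {a..b} (\<lambda>t. \<psi> t * \<psi> t) = integral {a..b} (\<lambda>t. \<psi> t * H t - m * \<psi> t)"
      by (rule integral_cong) (simp add: \<psi>_def algebra_simps)
    also have "\<dots> = 0" unfolding Henstock_Kurzweil_Integration.integral_diff[OF i3 i4] using I3 int\<psi> by simp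
    finally show ?thesis .
  qed
  have sq: "\<forall>t\<in>{a..b}. \<psi> t * \<psi> t = 0"
  proof -
    have c2: "continuous_on {a..b} (\<lambda>t. \<psi> t * \<psi> t)" by (rule continuous_on_mult[OF \<psi>c \<psi>c])
    have nn: "\<And>t. t \<in> {a..b} \<Longrightarrow> \<psi> t * \<psi> t \<ge> 0" by simp
    show ?thesis using integral_eq_0_iff[OF c2 ab nn] I5 by blast
  qed
  have Hm: "H t = m" if t: "t \<in> {a..b}" for t
  proof -
    have "\<psi> t * \<psi> t = 0" using sq t by blast
    then have "\<psi> t = 0" by simp
    then show ?thesis by (simp add: \<psi>_def)
  qed
  have aa: "a \<in> {a..b}" using ab by simp
  show ?thesis
  proof
    fix t assume t: "t \<in> {a..b}"
    have "H t = H a" using Hm[OF t] Hm[OF aa] by simp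
    then show "g t e - prim f a t e = g a e - prim f a a e" by (simp only: H_def Fe_def)
  qed
qed



theorem proposition5:
  fixes p :: "nat \<Rightarrow> 'a::real_vector \<Rightarrow> real"
    and f g :: "real \<Rightarrow> 'a \<Rightarrow> real" and a b :: real
  assumes "frechet_space p"
    and "a < b"
    and "\<forall>t\<in>{a..b}. f t \<in> dual p" and "\<forall>t\<in>{a..b}. g t \<in> dual p"
    and "\<forall>e. continuous_on {a..b} (\<lambda>t. f t e)"
    and "\<forall>e. continuous_on {a..b} (\<lambda>t. g t e)"
  shows "(\<forall>\<mu> \<mu>'. C1_curve p a b \<mu> \<mu>' \<and> \<mu> a = 0 \<and> \<mu> b = 0 \<longrightarrow>
            integral {a..b} (\<lambda>t. f t (\<mu> t) + g t (\<mu>' t)) = 0)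
     \<longleftrightarrow> (\<exists>c. \<forall>t\<in>{a..b}. (\<lambda>e. g t e - prim f a t e) = c)"
proof
  assume hyp: "\<forall>\<mu> \<mu>'. C1_curve p a b \<mu> \<mu>' \<and> \<mu> a = 0 \<and> \<mu> b = 0 \<longrightarrow>
            integral {a..b} (\<lambda>t. f t (\<mu> t) + g t (\<mu>' t)) = 0"
  have "\<forall>t\<in>{a..b}. (\<lambda>e. g t e - prim f a t e) = (\<lambda>e. g a e - prim f a a e)"
  proof
    fix t assume t: "t \<in> {a..b}"
    show "(\<lambda>e. g t e - prim f a t e) = (\<lambda>e. g a e - prim f a a e)"
    proof
      fix e
      show "g t e - prim f a t e = g a e - prim f a a e"
      proof -
        have "\<forall>t\<in>{a..b}. g t e - prim f a t e = g a e - prim f a a e" by (rule fwd_e[OF assms hyp])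
        then show ?thesis using t by blast
      qed
    qed
  qed
  then show "\<exists>c. \<forall>t\<in>{a..b}. (\<lambda>e. g t e - prim f a t e) = c" by blast
next
  assume "\<exists>c. \<forall>t\<in>{a..b}. (\<lambda>e. g t e - prim f a t e) = c"
  then obtain c where c: "\<forall>t\<in>{a..b}. (\<lambda>e. g t e - prim f a t e) = c" by blast
  have aa: "a \<in> {a..b}" using assms(2) by simp
  have pa: "prim f a a e = 0" for e by (simp add: prim_def)
  have gt: "g t e = g a e + prim f a t e" if t: "t \<in> {a..b}" for t e
  proof -
    have "(\<lambda>e. g t e - prim f a t e) = c" using c t by blast
    then have 1: "g t e - prim f a t e = c e" by (simp add: fun_eq_iff)
    have "(\<lambda>e. g a e - prim f a a e) = c" using c aa by blast
    then have 2: "g a e - prim f a a e = c e" by (simp add: fun_eq_iff)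
    from 1 2 show ?thesis using pa[of e] by simp
  qed
  have gad: "g a \<in> dual p" using assms(4) aa by blast
  have glin: "linear (g a)" using gad by (simp add: dual_def)
  show "\<forall>\<mu> \<mu>'. C1_curve p a b \<mu> \<mu>' \<and> \<mu> a = 0 \<and> \<mu> b = 0 \<longrightarrow>
            integral {a..b} (\<lambda>t. f t (\<mu> t) + g t (\<mu>' t)) = 0"
  proof (intro allI impI)
    fix \<mu> \<mu>' assume H: "C1_curve p a b \<mu> \<mu>' \<and> \<mu> a = 0 \<and> \<mu> b = 0"
    have "((\<lambda>t. g a (\<mu>' t) + prim f a t (\<mu>' t) + f t (\<mu> t)) has_integral
        ((g a (\<mu> b) + prim f a b (\<mu> b)) - (g a (\<mu> a) + prim f a a (\<mu> a)))) {a..b}"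
    proof (rule fundamental_theorem_of_calculus)
      show "a \<le> b" using assms(2) by simp
      fix t assume t: "t \<in> {a..b}"
      show "((\<lambda>s. g a (\<mu> s) + prim f a s (\<mu> s)) has_vector_derivative
          g a (\<mu>' t) + prim f a t (\<mu>' t) + f t (\<mu> t)) (at t within {a..b})"
        unfolding has_real_derivative_iff_has_vector_derivative[symmetric]
        by (rule deriv_main[OF assms(1) assms(3) assms(5) gad _ t]) (use H in blast)
    qed
    moreover have "prim f a b 0 = 0" using prim_lin(3)[OF assms(3) assms(5)] assms(2) by simp
    moreover have "prim f a a 0 = 0" by (rule pa)
    ultimately have "((\<lambda>t. g a (\<mu>' t) + prim f a t (\<mu>' t) + f t (\<mu> t)) has_integral 0) {a..b}"
      using H linear_0[OF glin] by simp
    then have "integral {a..b} (\<lambda>t. g a (\<mu>' t) + prim f a t (\<mu>' t) + f t (\<mu> t)) = 0"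
      by (rule integral_unique)
    moreover have "integral {a..b} (\<lambda>t. f t (\<mu> t) + g t (\<mu>' t))
        = integral {a..b} (\<lambda>t. g a (\<mu>' t) + prim f a t (\<mu>' t) + f t (\<mu> t))"
    proof (rule integral_cong)
      fix t assume t: "t \<in> {a..b}"
      have "g t (\<mu>' t) = g a (\<mu>' t) + prim f a t (\<mu>' t)" by (rule gt[OF t])
      then show "f t (\<mu> t) + g t (\<mu>' t) = g a (\<mu>' t) + prim f a t (\<mu>' t) + f t (\<mu> t)" by linarith
    qed
    ultimately show "integral {a..b} (\<lambda>t. f t (\<mu> t) + g t (\<mu>' t)) = 0" by simp
  qed
qed


end
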